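(* Let $A\in\mathbb{R}^{m\times n}$, $b\in\mathbb{R}^m$ and $\delta\ge 0$, and assume $\{x\in\mathbb{R}^n:\|Ax-b\|\le\delta\}\neq\emptyset$. Then for every $\rho>0$ the problem $$\min_{x,v\in\mathbb{R}^n}\{\langle e,e-v\rangle+\rho\langle v,|x|\rangle:\ \|Ax-b\|\le\delta,\ 0\le v\le e\}$$ has a nonempty set of (globally) optimal solutions.
   Context: $\|\cdot\|$ is the Euclidean norm, $e\in\mathbb{R}^n$ is the all-ones vector, $|x|$ is the componentwise absolute value, and vector inequalities are componentwise. *)

theory Defs
  imports "HOL-Analysis.Analysis"
begin

definition obj :: "real \<Rightarrow> real^'n \<Rightarrow> real^'n \<Rightarrow> real" where
  "obj \<rho> x v = (\<chi> i. 1) \<bullet> ((\<chi> i. 1) - v) + \<rho> * (v \<bullet> (\<chi> i. \<bar>x $ i\<bar>))"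

definition feasible :: "real^'n^'m \<Rightarrow> real^'m \<Rightarrow> real \<Rightarrow> real^'n \<Rightarrow> real^'n \<Rightarrow> bool" where
  "feasible A b \<delta> x v \<longleftrightarrow> norm (A *v x - b) \<le> \<delta> \<and> (\<forall>i. 0 \<le> v $ i \<and> v $ i \<le> 1)"

end

theory Submission
  imports Defs
begin

lemma closed_proj:
  fixes A :: "real^'n^'m" and P :: "real^'n \<Rightarrow> real^'n"
  assumes "linear P"
  shows "closed (P ` {x. norm (A *v x - b) \<le> \<delta>})"
proof -
  let ?f = "\<lambda>x. (P x, A *v x)"
  let ?S = "range ?f"
  have lf: "linear ?f" using assms unfolding linear_iff
    by (simp add: matrix_vector_right_distrib matrix_vector_mult_scaleR)
  have "subspace ?S" by (metis lf linear_subspace_image subspace_UNIV)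
  then have cS: "closed ?S" by (rule closed_subspace)
  have "closedin (top_of_set (UNIV \<times> cball b \<delta>)) (?S \<inter> (UNIV \<times> cball b \<delta>))"
    using closedin_closed_Int[OF cS, of "UNIV \<times> cball b \<delta>"] by (simp add: Int_commute)
  then have h1: "closedin (top_of_set UNIV) (fst ` (?S \<inter> (UNIV \<times> cball b \<delta>)))"
    by (rule Starlike.closed_map_fst[OF compact_cball])
  have h2: "fst ` (?S \<inter> (UNIV \<times> cball b \<delta>)) = P ` {x. norm (A *v x - b) \<le> \<delta>}"
  proof (intro set_eqI iffI)
    fix y assume "y \<in> fst ` (?S \<inter> (UNIV \<times> cball b \<delta>))"
    then obtain x where "y = P x" "dist b (A *v x) \<le> \<delta>" by auto
    then show "y \<in> P ` {x. norm (A *v x - b) \<le> \<delta>}" by (auto simp: dist_norm norm_minus_commute)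
  next
    fix y assume "y \<in> P ` {x. norm (A *v x - b) \<le> \<delta>}"
    then obtain x where x: "y = P x" "norm (A *v x - b) \<le> \<delta>" by auto
    then have "(P x, A *v x) \<in> ?S \<inter> (UNIV \<times> cball b \<delta>)" by (auto simp: dist_norm norm_minus_commute)
    then show "y \<in> fst ` (?S \<inter> (UNIV \<times> cball b \<delta>))" unfolding x(1) by (rule rev_image_eqI) simp
  qed
  have "closed (fst ` (?S \<inter> (UNIV \<times> cball b \<delta>)))"
    using h1 by (simp only: subtopology_UNIV closed_closedin)
  then show ?thesis by (simp only: h2)
qed

lemma min_T:
  fixes A :: "real^'n^'m" and T :: "'n set"
  assumes "{x. norm (A *v x - b) \<le> \<delta>} \<noteq> {}"
  shows "\<exists>x. norm (A *v x - b) \<le> \<delta> \<and> (\<forall>y. norm (A *v y - b) \<le> \<delta> \<longrightarrow>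
     (\<Sum>i\<in>UNIV. if i \<in> T then \<bar>x$i\<bar> else 0) \<le> (\<Sum>i\<in>UNIV. if i \<in> T then \<bar>y$i\<bar> else 0))"
proof -
  define P :: "real^'n \<Rightarrow> real^'n" where "P = (\<lambda>x. \<chi> i. if i \<in> T then x$i else 0)"
  define K where "K = {x. norm (A *v x - b) \<le> \<delta>}"
  define q :: "real^'n \<Rightarrow> real" where "q = (\<lambda>y. \<Sum>i\<in>UNIV. \<bar>y$i\<bar>)"
  have linP: "linear P" unfolding P_def
    by (rule linearI) (auto simp: vec_eq_iff)
  have qP: "q (P x) = (\<Sum>i\<in>UNIV. if i \<in> T then \<bar>x$i\<bar> else 0)" for x
    unfolding q_def P_def by (rule sum.cong) auto
  have cE: "closed (P ` K)" unfolding K_def by (rule closed_proj[OF linP])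
  obtain x0 where x0: "x0 \<in> K" using assms K_def by auto
  define C where "C = P ` K \<inter> cball 0 (q (P x0))"
  have "compact C" unfolding C_def using cE by (intro closed_Int_compact) auto
  moreover have "P x0 \<in> C" unfolding C_def q_def using x0 norm_le_l1_cart by auto
  moreover have "continuous_on C q" unfolding q_def by (intro continuous_intros)
  ultimately obtain z where z: "z \<in> C" "\<forall>y\<in>C. q z \<le> q y"
    using continuous_attains_inf by blast
  then obtain x where x: "x \<in> K" "z = P x" unfolding C_def by auto
  have "q (P x) \<le> q (P y)" if "y \<in> K" for y
  proof (cases "P y \<in> C")
    case True then show ?thesis using z x by auto
  next
    case False
    then have "norm (P y) > q (P x0)" using that unfolding C_def by auto
    moreover have "norm (P y) \<le> q (P y)" unfolding q_def by (rule norm_le_l1_cart)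
    moreover have "q z \<le> q (P x0)" using z \<open>P x0 \<in> C\<close> by auto
    ultimately show ?thesis using x by auto
  qed
  then show ?thesis using x qP unfolding K_def by auto
qed

theorem lemma3p1:
  fixes A :: "real^'n^'m" and b :: "real^'m" and \<delta> \<rho> :: real
  assumes "\<delta> \<ge> 0"
    and "{x. norm (A *v x - b) \<le> \<delta>} \<noteq> {}"
    and "\<rho> > 0"
  shows "{(x, v). feasible A b \<delta> x v \<and>
           (\<forall>y w. feasible A b \<delta> y w \<longrightarrow> obj \<rho> x v \<le> obj \<rho> y w)} \<noteq> {}"
proof -
  define sT where "sT = (\<lambda>(T::'n set) (x::real^'n). \<Sum>i\<in>UNIV. if i \<in> T then \<bar>x$i\<bar> else 0)"
  define cT where "cT = (\<lambda>(T::'n set). \<Sum>i\<in>(UNIV::'n set). if i \<in> T then 0 else (1::real))"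
  define K where "K = {x. norm (A *v x - b) \<le> \<delta>}"
  have "\<forall>T. \<exists>x. x \<in> K \<and> (\<forall>y\<in>K. sT T x \<le> sT T y)"
    using min_T[OF assms(2)] unfolding sT_def K_def by auto
  then obtain X where X: "\<And>T. X T \<in> K" "\<And>T y. y \<in> K \<Longrightarrow> sT T (X T) \<le> sT T y"
    by metis
  define G where "G = (\<lambda>T. cT T + \<rho> * sT T (X T))"
  have fin: "finite (range G)" by simp
  have "Min (range G) \<in> range G" using fin by (intro Min_in) auto
  then obtain T0 where T0e: "G T0 = Min (range G)" by (metis imageE)
  have T0: "G T0 \<le> G T" for T unfolding T0e using fin by (intro Min_le) auto
  define mn where "mn = (\<lambda>x::real^'n. \<Sum>i\<in>UNIV. min 1 (\<rho> * \<bar>x$i\<bar>))"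
  have objf: "obj \<rho> x v = (\<Sum>i\<in>UNIV. 1 - v$i + \<rho> * (v$i * \<bar>x$i\<bar>))" for x v
    by (simp add: obj_def inner_vec_def sum.distrib sum_subtractf sum_distrib_left)
  have lb: "mn y \<le> obj \<rho> y w" if "feasible A b \<delta> y w" for y w
    unfolding objf mn_def
  proof (rule sum_mono)
    fix i
    have w: "0 \<le> w$i" "w$i \<le> 1" using that unfolding feasible_def by auto
    show "min 1 (\<rho> * \<bar>y$i\<bar>) \<le> 1 - w$i + \<rho> * (w$i * \<bar>y$i\<bar>)"
    proof (cases "\<rho> * \<bar>y$i\<bar> \<ge> 1")
      case True
      have "0 \<le> w$i * (\<rho> * \<bar>y$i\<bar> - 1)" using w True by simp
      then show ?thesis by (simp add: algebra_simps)
    next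
      case False
      have "0 \<le> (1 - w$i) * (1 - \<rho> * \<bar>y$i\<bar>)" using w False by simp
      then show ?thesis by (simp add: algebra_simps)
    qed
  qed
  have mn_eq: "mn y = cT {i. \<rho> * \<bar>y$i\<bar> < 1} + \<rho> * sT {i. \<rho> * \<bar>y$i\<bar> < 1} y" for y
    unfolding mn_def cT_def sT_def sum_distrib_left sum.distrib[symmetric]
    by (rule sum.cong) auto
  have mn_le: "mn y \<le> cT T + \<rho> * sT T y" for y T
    unfolding mn_def cT_def sT_def sum_distrib_left sum.distrib[symmetric]
    by (rule sum_mono) auto
  define xs where "xs = X T0"
  define vs :: "real^'n" where "vs = (\<chi> i. if \<rho> * \<bar>xs$i\<bar> < 1 then 1 else 0)"
  have fs: "feasible A b \<delta> xs vs" using X(1)[of T0] unfolding feasible_def xs_def vs_def K_def by auto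
  have ov: "obj \<rho> xs vs = mn xs" unfolding objf mn_def vs_def
    by (rule sum.cong) auto
  have "obj \<rho> xs vs \<le> obj \<rho> y w" if fy: "feasible A b \<delta> y w" for y w
  proof -
    let ?T = "{i. \<rho> * \<bar>y$i\<bar> < 1}"
    have yK: "y \<in> K" using fy unfolding feasible_def K_def by auto
    have "obj \<rho> xs vs \<le> G T0" using ov mn_le[of xs T0] unfolding G_def xs_def by simp
    also have "\<dots> \<le> G ?T" by (rule T0)
    also have "\<dots> \<le> cT ?T + \<rho> * sT ?T y" unfolding G_def
      using X(2)[OF yK, of ?T] assms(3) by (simp add: mult_left_mono)
    also have "\<dots> = mn y" by (simp add: mn_eq)
    also have "\<dots> \<le> obj \<rho> y w" by (rule lb[OF fy])
    finally show ?thesis .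
  qed
  then show ?thesis using fs by blast
qed

end
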